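(* Let $G_o=(V,E)$ be an oriented graph with $|V|=n$ and induced partial order $P$ on $V$. Define $g:\hat E\to\mathbb{R}_{\ge0}$ by: for $(u,v)\in E$, $g(u,v)$ is the number of linear extensions $\sigma$ of $P$ with $\sigma(u)=\sigma(v)-1$; for $v\in V$ with out-degree $0$ in $G_o$, $g(v,\hat1)$ is the number of linear extensions $\sigma$ of $P$ with $\sigma(v)=n$; for $v\in V$ with in-degree $0$ in $G_o$, $g(\hat0,v)$ is the number of linear extensions $\sigma$ of $P$ with $\sigma(v)=1$. Then $g$ is a natural flow on $G_o$, and the net $g$-flow from $\hat0$ to $\hat1$ equals $e(P)$, the number of linear extensions of $P$.
   Context: An oriented graph $G_o=(V,E)$ is a simple connected undirected graph together with an acyclic orientation of its edges, regarded as a directed graph (each member of $E$ is an ordered pair). Its induced partial order is: $u<v$ iff there is a directed path from $u$ to $v$. $\hat G_o$ is the directed graph on vertex set $V\cup\{\hat0,\hat1\}$ whose directed edge set $\hat E$ is $E$ together with all edges $(v,\hat1)$ for $v\in V$ of out-degree $0$ in $G_o$ and all edges $(\hat0,v)$ for $v\in V$ of in-degree $0$ in $G_o$. A natural flow on $G_o$ is a function $f:\hat E\to\mathbb{R}_{\ge0}$ such that for every $v\in V$, $\sum_{(x,v)\in\hat E}f(x,v)=\sum_{(v,y)\in\hat E}f(v,y)$ (a nonnegative network flow on $\hat G_o$ with source $\hat0$, sink $\hat1$ and infinite capacities). A linear extension of a partial order $P$ on an $n$-element set $V$ is a bijection $\sigma:V\to[n]$ such that $u<_P v$ implies $\sigma(u)<\sigma(v)$.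 *)

theory Defs
  imports Complex_Main "HOL-Library.FuncSet"
begin

definition oriented_graph :: "'a set \<Rightarrow> ('a \<times> 'a) set \<Rightarrow> bool" where
  "oriented_graph V E \<longleftrightarrow>
     finite V \<and> V \<noteq> {} \<and> E \<subseteq> V \<times> V \<and>
     (\<forall>v. (v, v) \<notin> E) \<and>
     (\<forall>u v. (u, v) \<in> E \<longrightarrow> (v, u) \<notin> E) \<and>
     acyclic E \<and>
     (\<forall>u\<in>V. \<forall>v\<in>V. (u, v) \<in> (E \<union> E\<inverse>)\<^sup>*)"

definition induced_less :: "('a \<times> 'a) set \<Rightarrow> 'a \<Rightarrow> 'a \<Rightarrow> bool" where
  "induced_less E u v \<longleftrightarrow> (u, v) \<in> E\<^sup>+"

datatype 'a hatv = HZero | Vtx 'a | HOne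

definition out_degree :: "('a \<times> 'a) set \<Rightarrow> 'a \<Rightarrow> nat" where
  "out_degree E v = card {w. (v, w) \<in> E}"

definition in_degree :: "('a \<times> 'a) set \<Rightarrow> 'a \<Rightarrow> nat" where
  "in_degree E v = card {u. (u, v) \<in> E}"

definition hat_edges :: "'a set \<Rightarrow> ('a \<times> 'a) set \<Rightarrow> ('a hatv \<times> 'a hatv) set" where
  "hat_edges V E =
     {(Vtx u, Vtx v) | u v. (u, v) \<in> E}
     \<union> {(Vtx v, HOne) | v. v \<in> V \<and> out_degree E v = 0}
     \<union> {(HZero, Vtx v) | v. v \<in> V \<and> in_degree E v = 0}"

definition natural_flow :: "'a set \<Rightarrow> ('a \<times> 'a) set \<Rightarrow> ('a hatv \<times> 'a hatv \<Rightarrow> real) \<Rightarrow> bool" where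
  "natural_flow V E f \<longleftrightarrow>
     (\<forall>e\<in>hat_edges V E. f e \<ge> 0) \<and>
     (\<forall>v\<in>V. (\<Sum>e\<in>{e\<in>hat_edges V E. snd e = Vtx v}. f e)
            = (\<Sum>e\<in>{e\<in>hat_edges V E. fst e = Vtx v}. f e))"

text \<open>Net flow from \<open>\<hat>0\<close> to \<open>\<hat>1\<close>: total flow leaving the source \<open>\<hat>0\<close> (which has no incoming edges).\<close>
definition net_flow :: "'a set \<Rightarrow> ('a \<times> 'a) set \<Rightarrow> ('a hatv \<times> 'a hatv \<Rightarrow> real) \<Rightarrow> real" where
  "net_flow V E f = (\<Sum>e\<in>{e\<in>hat_edges V E. fst e = HZero}. f e)"

text \<open>Linear extensions of the partial order induced by E, as bijections V \<rightarrow> {1..n}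
 (taken extensional, i.e. undefined outside V, so that they are counted correctly).\<close>
definition linear_extensions :: "'a set \<Rightarrow> ('a \<times> 'a) set \<Rightarrow> ('a \<Rightarrow> nat) set" where
  "linear_extensions V E =
     {\<sigma> \<in> V \<rightarrow>\<^sub>E {1..card V}. bij_betw \<sigma> V {1..card V} \<and>
        (\<forall>u\<in>V. \<forall>v\<in>V. induced_less E u v \<longrightarrow> \<sigma> u < \<sigma> v)}"

definition num_linext :: "'a set \<Rightarrow> ('a \<times> 'a) set \<Rightarrow> nat" where
  "num_linext V E = card (linear_extensions V E)"

definition g_flow :: "'a set \<Rightarrow> ('a \<times> 'a) set \<Rightarrow> 'a hatv \<times> 'a hatv \<Rightarrow> real" where
  "g_flow V E e =
     (if e \<notin> hat_edges V E then 0 else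
      (case e of
         (Vtx u, Vtx v) \<Rightarrow> real (card {\<sigma> \<in> linear_extensions V E. \<sigma> u = \<sigma> v - 1})
       | (Vtx v, HOne) \<Rightarrow> real (card {\<sigma> \<in> linear_extensions V E. \<sigma> v = card V})
       | (HZero, Vtx v) \<Rightarrow> real (card {\<sigma> \<in> linear_extensions V E. \<sigma> v = 1})
       | _ \<Rightarrow> 0))"

end

theory Submission imports Defs "HOL-Combinatorics.Transposition" begin

lemma le_mem:
  assumes "\<sigma> \<in> linear_extensions V E"
  shows "\<sigma> \<in> V \<rightarrow>\<^sub>E {1..card V}" "bij_betw \<sigma> V {1..card V}" "inj_on \<sigma> V"
    "\<And>u v. u \<in> V \<Longrightarrow> v \<in> V \<Longrightarrow> (u,v) \<in> E\<^sup>+ \<Longrightarrow> \<sigma> u < \<sigma> v"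
    "\<And>u. u \<in> V \<Longrightarrow> 1 \<le> \<sigma> u \<and> \<sigma> u \<le> card V"
  using assms unfolding linear_extensions_def induced_less_def bij_betw_def
  by (auto simp: PiE_iff)

lemma adj:
  assumes "E \<subseteq> V \<times> V" "\<sigma> \<in> linear_extensions V E" "u \<in> V" "v \<in> V"
    "\<sigma> u + 1 = \<sigma> v" "(u,v) \<in> E\<^sup>+"
  shows "(u,v) \<in> E"
proof (rule ccontr)
  assume nE: "(u,v) \<notin> E"
  from assms(6) nE obtain y where 2: "(u,y) \<in> E" "(y,v) \<in> E\<^sup>+"
    by (metis converse_tranclE)
  have y: "y \<in> V" using 2 assms(1) by auto
  have "\<sigma> u < \<sigma> y" using le_mem(4)[OF assms(2) assms(3) y] 2 by auto
  moreover have "\<sigma> y < \<sigma> v" using le_mem(4)[OF assms(2) y assms(4)] 2 by auto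
  ultimately show False using assms(5) by auto
qed

lemma swap_le:
  assumes "\<sigma> \<in> linear_extensions V E" "a \<in> V" "b \<in> V" "\<sigma> a + 1 = \<sigma> b"
    "(a,b) \<notin> E\<^sup>+"
  shows "\<sigma> \<circ> transpose a b \<in> linear_extensions V E"
proof -
  note m = le_mem[OF assms(1)]
  have ab: "a \<noteq> b" using assms(4) by auto
  have ext: "\<sigma> \<circ> transpose a b \<in> V \<rightarrow>\<^sub>E {1..card V}"
    using m(1) assms(2,3) by (auto simp: PiE_iff transpose_def extensional_def)
  have bij: "bij_betw (\<sigma> \<circ> transpose a b) V {1..card V}"
    by (rule bij_betw_trans[OF _ m(2)]) (use assms(2,3) in \<open>auto simp: bij_betw_def inj_on_def transpose_def\<close>)
  have ord: "\<sigma> (transpose a b x) < \<sigma> (transpose a b y)"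
    if x: "x \<in> V" and y: "y \<in> V" and xy: "(x,y) \<in> E\<^sup>+" for x y
  proof -
    have lt: "\<sigma> x < \<sigma> y" using m(4)[OF x y xy] .
    have inj: "\<And>x y. x\<in>V \<Longrightarrow> y\<in>V \<Longrightarrow> \<sigma> x = \<sigma> y \<Longrightarrow> x = y"
      using m(3) by (auto simp: inj_on_def)
    have "x = a \<Longrightarrow> y = b \<Longrightarrow> False" using xy assms(5) by auto
    moreover have "x = b \<Longrightarrow> y = a \<Longrightarrow> False" using lt assms(4) by auto
    moreover have "x \<noteq> b \<Longrightarrow> \<sigma> x \<noteq> \<sigma> b" using inj x assms(3) by blast
    moreover have "x \<noteq> a \<Longrightarrow> \<sigma> x \<noteq> \<sigma> a" using inj x assms(2) by blast
    moreover have "y \<noteq> b \<Longrightarrow> \<sigma> y \<noteq> \<sigma> b" using inj y assms(3) by blast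
    moreover have "y \<noteq> a \<Longrightarrow> \<sigma> y \<noteq> \<sigma> a" using inj y assms(2) by blast
    ultimately show ?thesis using lt assms(4) ab unfolding transpose_def by auto
  qed
  show ?thesis using ext bij ord unfolding linear_extensions_def induced_less_def by auto
qed
definition Bin where "Bin V E v = {\<sigma>\<in>linear_extensions V E. \<sigma> v \<noteq> 1 \<and> (\<forall>u. (u,v)\<in>E \<longrightarrow> \<sigma> u + 1 \<noteq> \<sigma> v)}"
definition Bout where "Bout V E v = {\<sigma>\<in>linear_extensions V E. \<sigma> v \<noteq> card V \<and> (\<forall>w. (v,w)\<in>E \<longrightarrow> \<sigma> v + 1 \<noteq> \<sigma> w)}"

lemma Phi_facts:
  assumes EV: "E \<subseteq> V \<times> V" and v: "v \<in> V" and s: "\<sigma> \<in> Bin V E v"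
  defines "w \<equiv> inv_into V \<sigma> (\<sigma> v - 1)"
  shows "\<sigma> \<circ> transpose w v \<in> Bout V E v"
    "inv_into V (\<sigma> \<circ> transpose w v) ((\<sigma> \<circ> transpose w v) v + 1) = w"
proof -
  have L: "\<sigma> \<in> linear_extensions V E" using s by (simp add: Bin_def)
  note m = le_mem[OF L]
  have "\<sigma> v \<noteq> 1" using s by (simp add: Bin_def)
  hence "\<sigma> v - 1 \<in> {1..card V}" using m(5)[OF v] by auto
  hence img: "\<sigma> v - 1 \<in> \<sigma> ` V" using m(2) by (simp add: bij_betw_def)
  have w: "w \<in> V" unfolding w_def by (rule inv_into_into[OF img])
  have sw: "\<sigma> w = \<sigma> v - 1" unfolding w_def by (rule f_inv_into_f[OF img])
  have sw1: "\<sigma> w + 1 = \<sigma> v" using sw \<open>\<sigma> v \<noteq> 1\<close> m(5)[OF v] by auto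
  have wv: "w \<noteq> v" using sw1 by auto
  have nE: "(w,v) \<notin> E" using s sw1 by (auto simp: Bin_def)
  have ntr: "(w,v) \<notin> E\<^sup>+" using adj[OF EV L w v sw1] nE by blast
  define \<tau> where "\<tau> = \<sigma> \<circ> transpose w v"
  have tL: "\<tau> \<in> linear_extensions V E" unfolding \<tau>_def by (rule swap_le[OF L w v sw1 ntr])
  note mt = le_mem[OF tL]
  have tv: "\<tau> v = \<sigma> w" and tw: "\<tau> w = \<sigma> v" unfolding \<tau>_def by auto
  have "\<tau> v \<noteq> card V" using tv sw1 m(5)[OF v] by auto
  moreover have "\<forall>x. (v,x)\<in>E \<longrightarrow> \<tau> v + 1 \<noteq> \<tau> x"
  proof (intro allI impI)
    fix x assume vx: "(v,x) \<in> E"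
    hence x: "x \<in> V" using EV by auto
    show "\<tau> v + 1 \<noteq> \<tau> x"
    proof
      assume "\<tau> v + 1 = \<tau> x"
      hence "\<tau> x = \<tau> w" using tv tw sw1 by auto
      hence "x = w" using mt(3) x w by (auto simp: inj_on_def)
      hence "\<sigma> v < \<sigma> w" using m(4)[OF v w] vx by auto
      thus False using sw1 by auto
    qed
  qed
  ultimately show "\<sigma> \<circ> transpose w v \<in> Bout V E v" using tL unfolding Bout_def \<tau>_def by auto
  show "inv_into V (\<sigma> \<circ> transpose w v) ((\<sigma> \<circ> transpose w v) v + 1) = w"
    using inv_into_f_eq[OF mt(3) w] tv tw sw1 unfolding \<tau>_def by auto
qed

lemma Psi_facts:
  assumes EV: "E \<subseteq> V \<times> V" and v: "v \<in> V" and s: "\<sigma> \<in> Bout V E v"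
  defines "w \<equiv> inv_into V \<sigma> (\<sigma> v + 1)"
  shows "\<sigma> \<circ> transpose v w \<in> Bin V E v"
    "inv_into V (\<sigma> \<circ> transpose v w) ((\<sigma> \<circ> transpose v w) v - 1) = w"
proof -
  have L: "\<sigma> \<in> linear_extensions V E" using s by (simp add: Bout_def)
  note m = le_mem[OF L]
  have "\<sigma> v \<noteq> card V" using s by (simp add: Bout_def)
  hence "\<sigma> v + 1 \<in> {1..card V}" using m(5)[OF v] by auto
  hence img: "\<sigma> v + 1 \<in> \<sigma> ` V" using m(2) by (simp add: bij_betw_def)
  have w: "w \<in> V" unfolding w_def by (rule inv_into_into[OF img])
  have sw1: "\<sigma> v + 1 = \<sigma> w" unfolding w_def by (rule f_inv_into_f[OF img, symmetric])
  have nE: "(v,w) \<notin> E" using s sw1 by (auto simp: Bout_def)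
  have ntr: "(v,w) \<notin> E\<^sup>+" using adj[OF EV L v w sw1] nE by blast
  define \<tau> where "\<tau> = \<sigma> \<circ> transpose v w"
  have tL: "\<tau> \<in> linear_extensions V E" unfolding \<tau>_def by (rule swap_le[OF L v w sw1 ntr])
  note mt = le_mem[OF tL]
  have tv: "\<tau> v = \<sigma> w" and tw: "\<tau> w = \<sigma> v" unfolding \<tau>_def by auto
  have "\<tau> v \<noteq> 1" using tv sw1 m(5)[OF v] by auto
  moreover have "\<forall>x. (x,v)\<in>E \<longrightarrow> \<tau> x + 1 \<noteq> \<tau> v"
  proof (intro allI impI)
    fix x assume vx: "(x,v) \<in> E"
    hence x: "x \<in> V" using EV by auto
    show "\<tau> x + 1 \<noteq> \<tau> v"
    proof
      assume "\<tau> x + 1 = \<tau> v"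
      hence "\<tau> x = \<tau> w" using tv tw sw1 by auto
      hence "x = w" using mt(3) x w by (auto simp: inj_on_def)
      hence "\<sigma> w < \<sigma> v" using m(4)[OF w v] vx by auto
      thus False using sw1 by auto
    qed
  qed
  ultimately show "\<sigma> \<circ> transpose v w \<in> Bin V E v" using tL unfolding Bin_def \<tau>_def by auto
  show "inv_into V (\<sigma> \<circ> transpose v w) ((\<sigma> \<circ> transpose v w) v - 1) = w"
  proof -
    have e: "\<sigma> w - 1 = \<sigma> v" using sw1 by auto
    show ?thesis using inv_into_f_eq[OF mt(3) w] tv tw e unfolding \<tau>_def by auto
  qed
qed

lemma card_Bin_Bout:
  assumes EV: "E \<subseteq> V \<times> V" and v: "v \<in> V"
  shows "card (Bin V E v) = card (Bout V E v)"
proof -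
  define \<Phi> where "\<Phi> \<sigma> = \<sigma> \<circ> transpose (inv_into V \<sigma> (\<sigma> v - 1)) v" for \<sigma> :: "'a \<Rightarrow> nat"
  define \<Psi> where "\<Psi> \<sigma> = \<sigma> \<circ> transpose v (inv_into V \<sigma> (\<sigma> v + 1))" for \<sigma> :: "'a \<Rightarrow> nat"
  have "bij_betw \<Phi> (Bin V E v) (Bout V E v)"
  proof (rule bij_betw_byWitness[where f'=\<Psi>])
    show "\<forall>a\<in>Bin V E v. \<Psi> (\<Phi> a) = a"
    proof
      fix a assume a: "a \<in> Bin V E v"
      note F = Phi_facts[OF EV v a]
      show "\<Psi> (\<Phi> a) = a" unfolding \<Psi>_def \<Phi>_def F(2)
        by (simp add: comp_assoc transpose_commute)
    qed
    show "\<forall>a\<in>Bout V E v. \<Phi> (\<Psi> a) = a"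
    proof
      fix a assume a: "a \<in> Bout V E v"
      note F = Psi_facts[OF EV v a]
      show "\<Phi> (\<Psi> a) = a" unfolding \<Psi>_def \<Phi>_def F(2)
        by (simp add: comp_assoc transpose_commute)
    qed
    show "\<Phi> ` Bin V E v \<subseteq> Bout V E v" using Phi_facts(1)[OF EV v] unfolding \<Phi>_def by auto
    show "\<Psi> ` Bout V E v \<subseteq> Bin V E v" using Psi_facts(1)[OF EV v] unfolding \<Psi>_def by auto
  qed
  thus ?thesis by (rule bij_betw_same_card)
qed
lemma finL: "finite V \<Longrightarrow> finite (linear_extensions V E)"
  by (rule finite_subset[of _ "V \<rightarrow>\<^sub>E {1..card V}"]) (auto simp: linear_extensions_def intro: finite_PiE)

lemma in_sum:
  assumes EV: "E \<subseteq> V \<times> V" and fin: "finite V" and v: "v \<in> V"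
  shows "(\<Sum>e\<in>{e\<in>hat_edges V E. snd e = Vtx v}. g_flow V E e)
      = real (card (linear_extensions V E - Bin V E v))"
proof -
  let ?L = "linear_extensions V E"
  define U where "U = {u. (u,v) \<in> E}"
  have UV: "U \<subseteq> V" using EV by (auto simp: U_def)
  have finU: "finite U" using finite_subset[OF UV fin] .
  have deg: "in_degree E v = 0 \<longleftrightarrow> U = {}" using finU by (simp add: in_degree_def U_def)
  define Z where "Z = (if U = {} then {(HZero :: 'a hatv, Vtx v)} else {})"
  have set: "{e\<in>hat_edges V E. snd e = Vtx v} = (\<lambda>u. (Vtx u, Vtx v)) ` U \<union> Z"
    using v deg unfolding hat_edges_def U_def Z_def by auto
  have hatU: "(Vtx u, Vtx v) \<in> hat_edges V E" if "u \<in> U" for u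
    using that by (auto simp: hat_edges_def U_def)
  have S1: "(\<Sum>e\<in>(\<lambda>u. (Vtx u, Vtx v)) ` U. g_flow V E e)
       = (\<Sum>u\<in>U. real (card {\<sigma>\<in>?L. \<sigma> u + 1 = \<sigma> v}))"
  proof (subst sum.reindex)
    show "inj_on (\<lambda>u. (Vtx u, Vtx v)) U" by (auto simp: inj_on_def)
    show "sum (g_flow V E \<circ> (\<lambda>u. (Vtx u, Vtx v))) U = (\<Sum>u\<in>U. real (card {\<sigma>\<in>?L. \<sigma> u + 1 = \<sigma> v}))"
    proof (rule sum.cong[OF refl])
      fix u assume u: "u \<in> U"
      have uV: "u \<in> V" using u UV by auto
      have "(\<sigma> u = \<sigma> v - 1) = (\<sigma> u + 1 = \<sigma> v)" if "\<sigma>\<in>?L" for \<sigma>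
        using le_mem(5)[OF that uV] le_mem(5)[OF that v] by linarith
      hence "{\<sigma>\<in>?L. \<sigma> u = \<sigma> v - 1} = {\<sigma>\<in>?L. \<sigma> u + 1 = \<sigma> v}" by blast
      thus "(g_flow V E \<circ> (\<lambda>u. (Vtx u, Vtx v))) u = real (card {\<sigma>\<in>?L. \<sigma> u + 1 = \<sigma> v})"
        using hatU[OF u] by (simp add: g_flow_def)
    qed
  qed
  have one: "{\<sigma>\<in>?L. \<sigma> v = 1} = {}" if ne: "U \<noteq> {}"
  proof -
    obtain u where "u \<in> U" using ne by auto
    hence "u \<in> V" "(u,v) \<in> E" using UV by (auto simp: U_def)
    hence "\<sigma> v \<noteq> 1" if "\<sigma>\<in>?L" for \<sigma> using le_mem(4)[OF that \<open>u\<in>V\<close> v r_into_trancl'[OF \<open>(u,v)\<in>E\<close>]] le_mem(5)[OF that \<open>u\<in>V\<close>] by auto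
    thus ?thesis by blast
  qed
  have S2: "(\<Sum>e\<in>Z. g_flow V E e) = real (card {\<sigma>\<in>?L. \<sigma> v = 1})"
  proof (cases "U = {}")
    case True
    then show ?thesis using v deg by (auto simp: Z_def g_flow_def hat_edges_def)
  next
    case False
    have E1: "{\<sigma>\<in>?L. \<sigma> v = 1} = {}" by (rule one[OF False])
    have c: "card {\<sigma>\<in>?L. \<sigma> v = 1} = 0" unfolding E1 by simp
    show ?thesis using False unfolding c by (simp add: Z_def)
  qed
  have disj: "(\<lambda>u. (Vtx u, Vtx v)) ` U \<inter> Z = {}" by (auto simp: Z_def)
  have "(\<Sum>e\<in>{e\<in>hat_edges V E. snd e = Vtx v}. g_flow V E e)
      = real (card {\<sigma>\<in>?L. \<sigma> v = 1}) + (\<Sum>u\<in>U. real (card {\<sigma>\<in>?L. \<sigma> u + 1 = \<sigma> v}))"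
    unfolding set using S1 S2 disj finU by (simp add: sum.union_disjoint Z_def)
  also have "(\<Sum>u\<in>U. real (card {\<sigma>\<in>?L. \<sigma> u + 1 = \<sigma> v})) = real (card (\<Union>u\<in>U. {\<sigma>\<in>?L. \<sigma> u + 1 = \<sigma> v}))"
  proof -
    have "card (\<Union>u\<in>U. {\<sigma>\<in>?L. \<sigma> u + 1 = \<sigma> v}) = (\<Sum>u\<in>U. card {\<sigma>\<in>?L. \<sigma> u + 1 = \<sigma> v})"
    proof (rule card_UN_disjoint[OF finU])
      show "\<forall>i\<in>U. finite {\<sigma>\<in>?L. \<sigma> i + 1 = \<sigma> v}" using finL[OF fin] by auto
      show "\<forall>i\<in>U. \<forall>j\<in>U. i \<noteq> j \<longrightarrow> {\<sigma>\<in>?L. \<sigma> i + 1 = \<sigma> v} \<inter> {\<sigma>\<in>?L. \<sigma> j + 1 = \<sigma> v} = {}"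
      proof (intro ballI impI)
        fix i j assume "i \<in> U" "j \<in> U" "i \<noteq> j"
        hence "\<sigma> i \<noteq> \<sigma> j" if "\<sigma>\<in>?L" for \<sigma> using UV le_mem(3)[OF that] by (auto simp: inj_on_def)
        thus "{\<sigma>\<in>?L. \<sigma> i + 1 = \<sigma> v} \<inter> {\<sigma>\<in>?L. \<sigma> j + 1 = \<sigma> v} = {}" by (auto, metis Suc_inject)
      qed
    qed
    thus ?thesis by simp
  qed
  also have "real (card {\<sigma>\<in>?L. \<sigma> v = 1}) + real (card (\<Union>u\<in>U. {\<sigma>\<in>?L. \<sigma> u + 1 = \<sigma> v}))
      = real (card ({\<sigma>\<in>?L. \<sigma> v = 1} \<union> (\<Union>u\<in>U. {\<sigma>\<in>?L. \<sigma> u + 1 = \<sigma> v})))"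
  proof -
    have "{\<sigma>\<in>?L. \<sigma> v = 1} \<inter> (\<Union>u\<in>U. {\<sigma>\<in>?L. \<sigma> u + 1 = \<sigma> v}) = {}"
    proof -
      have "\<sigma> u + 1 \<noteq> 1" if "\<sigma>\<in>?L" "u \<in> U" for \<sigma> u
      proof -
        have "u \<in> V" using UV that(2) by auto
        thus ?thesis using le_mem(5)[OF that(1) \<open>u\<in>V\<close>] by auto
      qed
      thus ?thesis by fastforce
    qed
    moreover have "finite {\<sigma>\<in>?L. \<sigma> v = 1}" "finite (\<Union>u\<in>U. {\<sigma>\<in>?L. \<sigma> u + 1 = \<sigma> v})"
      using finL[OF fin] finU by auto
    ultimately show ?thesis by (simp add: card_Un_disjoint)
  qed
  also have "{\<sigma>\<in>?L. \<sigma> v = 1} \<union> (\<Union>u\<in>U. {\<sigma>\<in>?L. \<sigma> u + 1 = \<sigma> v}) = ?L - Bin V E v"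
    by (auto simp: Bin_def U_def)
  finally show ?thesis .
qed

lemma out_sum:
  assumes EV: "E \<subseteq> V \<times> V" and fin: "finite V" and v: "v \<in> V"
  shows "(\<Sum>e\<in>{e\<in>hat_edges V E. fst e = Vtx v}. g_flow V E e)
      = real (card (linear_extensions V E - Bout V E v))"
proof -
  let ?L = "linear_extensions V E"
  define U where "U = {u. (v,u) \<in> E}"
  have UV: "U \<subseteq> V" using EV by (auto simp: U_def)
  have finU: "finite U" using finite_subset[OF UV fin] .
  have deg: "out_degree E v = 0 \<longleftrightarrow> U = {}" using finU by (simp add: out_degree_def U_def)
  define Z where "Z = (if U = {} then {(Vtx v, HOne :: 'a hatv)} else {})"
  have set: "{e\<in>hat_edges V E. fst e = Vtx v} = (\<lambda>u. (Vtx v, Vtx u)) ` U \<union> Z"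
    using v deg unfolding hat_edges_def U_def Z_def by auto
  have hatU: "(Vtx v, Vtx u) \<in> hat_edges V E" if "u \<in> U" for u
    using that by (auto simp: hat_edges_def U_def)
  have S1: "(\<Sum>e\<in>(\<lambda>u. (Vtx v, Vtx u)) ` U. g_flow V E e)
       = (\<Sum>u\<in>U. real (card {\<sigma>\<in>?L. \<sigma> v + 1 = \<sigma> u}))"
  proof (subst sum.reindex)
    show "inj_on (\<lambda>u. (Vtx v, Vtx u)) U" by (auto simp: inj_on_def)
    show "sum (g_flow V E \<circ> (\<lambda>u. (Vtx v, Vtx u))) U = (\<Sum>u\<in>U. real (card {\<sigma>\<in>?L. \<sigma> v + 1 = \<sigma> u}))"
    proof (rule sum.cong[OF refl])
      fix u assume u: "u \<in> U"
      have uV: "u \<in> V" using u UV by auto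
      have "(\<sigma> v = \<sigma> u - 1) = (\<sigma> v + 1 = \<sigma> u)" if "\<sigma>\<in>?L" for \<sigma>
        using le_mem(5)[OF that uV] le_mem(5)[OF that v] by linarith
      hence "{\<sigma>\<in>?L. \<sigma> v = \<sigma> u - 1} = {\<sigma>\<in>?L. \<sigma> v + 1 = \<sigma> u}" by blast
      thus "(g_flow V E \<circ> (\<lambda>u. (Vtx v, Vtx u))) u = real (card {\<sigma>\<in>?L. \<sigma> v + 1 = \<sigma> u})"
        using hatU[OF u] by (simp add: g_flow_def)
    qed
  qed
  have one: "{\<sigma>\<in>?L. \<sigma> v = card V} = {}" if ne: "U \<noteq> {}"
  proof -
    obtain u where "u \<in> U" using ne by auto
    hence "u \<in> V" "(v,u) \<in> E" using UV by (auto simp: U_def)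
    hence "\<sigma> v \<noteq> card V" if "\<sigma>\<in>?L" for \<sigma> using le_mem(4)[OF that v \<open>u\<in>V\<close> r_into_trancl'[OF \<open>(v,u)\<in>E\<close>]] le_mem(5)[OF that \<open>u\<in>V\<close>] by auto
    thus ?thesis by blast
  qed
  have S2: "(\<Sum>e\<in>Z. g_flow V E e) = real (card {\<sigma>\<in>?L. \<sigma> v = card V})"
  proof (cases "U = {}")
    case True
    then show ?thesis using v deg by (auto simp: Z_def g_flow_def hat_edges_def)
  next
    case False
    have E1: "{\<sigma>\<in>?L. \<sigma> v = card V} = {}" by (rule one[OF False])
    have c: "card {\<sigma>\<in>?L. \<sigma> v = card V} = 0" unfolding E1 by simp
    show ?thesis using False unfolding c by (simp add: Z_def)
  qed
  have disj: "(\<lambda>u. (Vtx v, Vtx u)) ` U \<inter> Z = {}" by (auto simp: Z_def)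
  have "(\<Sum>e\<in>{e\<in>hat_edges V E. fst e = Vtx v}. g_flow V E e)
      = real (card {\<sigma>\<in>?L. \<sigma> v = card V}) + (\<Sum>u\<in>U. real (card {\<sigma>\<in>?L. \<sigma> v + 1 = \<sigma> u}))"
    unfolding set using S1 S2 disj finU by (simp add: sum.union_disjoint Z_def)
  also have "(\<Sum>u\<in>U. real (card {\<sigma>\<in>?L. \<sigma> v + 1 = \<sigma> u})) = real (card (\<Union>u\<in>U. {\<sigma>\<in>?L. \<sigma> v + 1 = \<sigma> u}))"
  proof -
    have "card (\<Union>u\<in>U. {\<sigma>\<in>?L. \<sigma> v + 1 = \<sigma> u}) = (\<Sum>u\<in>U. card {\<sigma>\<in>?L. \<sigma> v + 1 = \<sigma> u})"
    proof (rule card_UN_disjoint[OF finU])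
      show "\<forall>i\<in>U. finite {\<sigma>\<in>?L. \<sigma> v + 1 = \<sigma> i}" using finL[OF fin] by auto
      show "\<forall>i\<in>U. \<forall>j\<in>U. i \<noteq> j \<longrightarrow> {\<sigma>\<in>?L. \<sigma> v + 1 = \<sigma> i} \<inter> {\<sigma>\<in>?L. \<sigma> v + 1 = \<sigma> j} = {}"
      proof (intro ballI impI)
        fix i j assume "i \<in> U" "j \<in> U" "i \<noteq> j"
        hence "\<sigma> i \<noteq> \<sigma> j" if "\<sigma>\<in>?L" for \<sigma> using UV le_mem(3)[OF that] by (auto simp: inj_on_def)
        thus "{\<sigma>\<in>?L. \<sigma> v + 1 = \<sigma> i} \<inter> {\<sigma>\<in>?L. \<sigma> v + 1 = \<sigma> j} = {}" by (auto, metis)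
      qed
    qed
    thus ?thesis by simp
  qed
  also have "real (card {\<sigma>\<in>?L. \<sigma> v = card V}) + real (card (\<Union>u\<in>U. {\<sigma>\<in>?L. \<sigma> v + 1 = \<sigma> u}))
      = real (card ({\<sigma>\<in>?L. \<sigma> v = card V} \<union> (\<Union>u\<in>U. {\<sigma>\<in>?L. \<sigma> v + 1 = \<sigma> u})))"
  proof -
    have "{\<sigma>\<in>?L. \<sigma> v = card V} \<inter> (\<Union>u\<in>U. {\<sigma>\<in>?L. \<sigma> v + 1 = \<sigma> u}) = {}"
    proof -
      have "\<sigma> v + 1 \<noteq> \<sigma> u \<or> \<sigma> v \<noteq> card V" if "\<sigma>\<in>?L" "u \<in> U" for \<sigma> u
      proof -
        have "u \<in> V" using UV that(2) by auto
        thus ?thesis using le_mem(5)[OF that(1) \<open>u\<in>V\<close>] by auto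
      qed
      thus ?thesis by fastforce
    qed
    moreover have "finite {\<sigma>\<in>?L. \<sigma> v = card V}" "finite (\<Union>u\<in>U. {\<sigma>\<in>?L. \<sigma> v + 1 = \<sigma> u})"
      using finL[OF fin] finU by auto
    ultimately show ?thesis by (simp add: card_Un_disjoint)
  qed
  also have "{\<sigma>\<in>?L. \<sigma> v = card V} \<union> (\<Union>u\<in>U. {\<sigma>\<in>?L. \<sigma> v + 1 = \<sigma> u}) = ?L - Bout V E v"
    by (auto simp: Bout_def U_def)
  finally show ?thesis .
qed

lemma net:
  assumes EV: "E \<subseteq> V \<times> V" and fin: "finite V" and ne: "V \<noteq> {}"
  shows "net_flow V E (g_flow V E) = real (num_linext V E)"
proof -
  let ?L = "linear_extensions V E"
  define U where "U = {v\<in>V. in_degree E v = 0}"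
  have finU: "finite U" using fin by (auto simp: U_def)
  have set: "{e\<in>hat_edges V E. fst e = HZero} = (\<lambda>v. (HZero, Vtx v)) ` U"
    unfolding hat_edges_def U_def by auto
  have "net_flow V E (g_flow V E) = (\<Sum>v\<in>U. real (card {\<sigma>\<in>?L. \<sigma> v = 1}))"
    unfolding net_flow_def set
    by (subst sum.reindex) (auto simp: inj_on_def g_flow_def hat_edges_def U_def intro!: sum.cong)
  also have "\<dots> = real (card (\<Union>v\<in>U. {\<sigma>\<in>?L. \<sigma> v = 1}))"
  proof -
    have "card (\<Union>v\<in>U. {\<sigma>\<in>?L. \<sigma> v = 1}) = (\<Sum>v\<in>U. card {\<sigma>\<in>?L. \<sigma> v = 1})"
    proof (rule card_UN_disjoint[OF finU])
      show "\<forall>i\<in>U. finite {\<sigma>\<in>?L. \<sigma> i = 1}" using finL[OF fin] by auto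
      show "\<forall>i\<in>U. \<forall>j\<in>U. i \<noteq> j \<longrightarrow> {\<sigma>\<in>?L. \<sigma> i = 1} \<inter> {\<sigma>\<in>?L. \<sigma> j = 1} = {}"
      proof (intro ballI impI)
        fix i j assume "i \<in> U" "j \<in> U" "i \<noteq> j"
        hence "\<sigma> i \<noteq> \<sigma> j" if "\<sigma>\<in>?L" for \<sigma> using le_mem(3)[OF that] by (auto simp: inj_on_def U_def)
        thus "{\<sigma>\<in>?L. \<sigma> i = 1} \<inter> {\<sigma>\<in>?L. \<sigma> j = 1} = {}" by (auto, metis)
      qed
    qed
    thus ?thesis by simp
  qed
  also have "(\<Union>v\<in>U. {\<sigma>\<in>?L. \<sigma> v = 1}) = ?L"
  proof (intro equalityI subsetI)
    fix \<sigma> assume s: "\<sigma> \<in> ?L"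
    note m = le_mem[OF s]
    have "card V \<ge> 1" using fin ne by (simp add: Suc_leI card_gt_0_iff)
    hence "1 \<in> \<sigma> ` V" using m(2) by (auto simp: bij_betw_def)
    then obtain v where v: "v \<in> V" "\<sigma> v = 1" by auto
    have "in_degree E v = 0"
    proof -
      have "{u. (u,v) \<in> E} = {}"
      proof (rule ccontr)
        assume "{u. (u,v) \<in> E} \<noteq> {}"
        then obtain u where uv: "(u,v) \<in> E" by auto
        hence u: "u \<in> V" using EV by auto
        have "\<sigma> u < \<sigma> v" using m(4)[OF u v(1) r_into_trancl'[OF uv]] .
        thus False using m(5)[OF u] v by auto
      qed
      thus ?thesis by (simp add: in_degree_def)
    qed
    thus "\<sigma> \<in> (\<Union>v\<in>U. {\<sigma>\<in>?L. \<sigma> v = 1})" using v s by (auto simp: U_def)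
  qed auto
  finally show ?thesis by (simp add: num_linext_def)
qed

theorem lemma3p9:
  fixes V :: "'a set" and E :: "('a \<times> 'a) set"
  assumes "oriented_graph V E"
  shows "natural_flow V E (g_flow V E) \<and> net_flow V E (g_flow V E) = real (num_linext V E)"
proof -
  have EV: "E \<subseteq> V \<times> V" and fin: "finite V" and ne: "V \<noteq> {}"
    using assms by (auto simp: oriented_graph_def)
  have nn: "\<forall>e\<in>hat_edges V E. g_flow V E e \<ge> 0"
    by (auto simp: g_flow_def split: prod.split hatv.split)
  have cons: "\<forall>v\<in>V. (\<Sum>e\<in>{e\<in>hat_edges V E. snd e = Vtx v}. g_flow V E e)
            = (\<Sum>e\<in>{e\<in>hat_edges V E. fst e = Vtx v}. g_flow V E e)"
  proof
    fix v assume v: "v \<in> V"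
    let ?L = "linear_extensions V E"
    have f: "finite ?L" by (rule finL[OF fin])
    have "card (?L - Bin V E v) = card ?L - card (Bin V E v)"
      by (rule card_Diff_subset) (use f in \<open>auto simp: Bin_def intro: finite_subset\<close>)
    moreover have "card (?L - Bout V E v) = card ?L - card (Bout V E v)"
      by (rule card_Diff_subset) (use f in \<open>auto simp: Bout_def intro: finite_subset\<close>)
    ultimately have "card (?L - Bin V E v) = card (?L - Bout V E v)"
      using card_Bin_Bout[OF EV v] by simp
    thus "(\<Sum>e\<in>{e\<in>hat_edges V E. snd e = Vtx v}. g_flow V E e)
            = (\<Sum>e\<in>{e\<in>hat_edges V E. fst e = Vtx v}. g_flow V E e)"
      using in_sum[OF EV fin v] out_sum[OF EV fin v] by simp
  qed
  show ?thesis using nn cons net[OF EV fin ne] by (simp add: natural_flow_def)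
qed
end
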